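(* Let $R\subseteq\mathbb R$ be an archimedean real closed field and $\overline F$ a field with $R\subseteq\overline F\subseteq\mathbb R$. Then the map $\iota_{\overline F|R}:M(R(y))\to M(\overline F(y))$, $\zeta\mapsto\zeta_{\overline F}$, is a continuous injective map compatible with restriction. If $\overline F$ is real closed, then it is a homeomorphism onto $M(\overline F(y))$.
   Context: For a field $K$, $M(K)$ is the set of $\mathbb R$-places $K\to\mathbb R\cup\{\infty\}$, with topology generated by the subbasis $H'(b)=\{\zeta\in M(K)\mid \infty\ne\zeta(b)>0\}$, $b\in K$. Every $\zeta\in M(R(y))$ is the identity on $R$; its constant extension $\zeta_{\overline F}$ is the unique $\mathbb R$-place of $\overline F(y)$ which is the identity on $\overline F$ and satisfies $\zeta_{\overline F}(y)=\zeta(y)$. Compatible with restriction means $\zeta_{\overline F}|_{R(y)}=\zeta$. *)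

theory Defs
  imports "HOL-Analysis.Analysis" "HOL-Computational_Algebra.Polynomial" "HOL-Computational_Algebra.Fraction_Field"
begin

definition real_subfield :: "real set \<Rightarrow> bool" where
  "real_subfield S \<longleftrightarrow> 0 \<in> S \<and> 1 \<in> S \<and>
     (\<forall>a\<in>S. \<forall>b\<in>S. a + b \<in> S \<and> a * b \<in> S) \<and>
     (\<forall>a\<in>S. - a \<in> S \<and> inverse a \<in> S)"

definition real_closed_subfield :: "real set \<Rightarrow> bool" where
  "real_closed_subfield S \<longleftrightarrow> real_subfield S \<and>
     (\<forall>a\<in>S. a > 0 \<longrightarrow> (\<exists>b\<in>S. b * b = a)) \<and>
     (\<forall>p :: real poly. (\<forall>i. coeff p i \<in> S) \<and> odd (degree p) \<longrightarrow>
        (\<exists>x\<in>S. poly p x = 0))"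

definition ratfun_field :: "real set \<Rightarrow> real poly fract set" where
  "ratfun_field S = {Fract p q | p q.
      (\<forall>i. coeff p i \<in> S) \<and> (\<forall>i. coeff q i \<in> S) \<and> q \<noteq> 0}"

definition var_y :: "real poly fract" where
  "var_y = Fract [:0, 1:] 1"

definition const_fract :: "real \<Rightarrow> real poly fract" where
  "const_fract c = Fract [:c:] 1"

text \<open>R-places of a field K (a subfield of the ambient field type): maps K \<rightarrow> R \<union> {\<infinity>},
  with \<infinity> represented by None.  The finite part is a valuation ring of K on which the
  map is a ring homomorphism into R; the value \<infinity> is attained exactly at the nonzero
  elements whose inverse is sent to 0.  Outside K the map is normalised to None.\<close>
definition real_place :: "'a::field set \<Rightarrow> ('a \<Rightarrow> real option) \<Rightarrow> bool" where
  "real_place K \<zeta> \<longleftrightarrow>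
     (\<forall>a. a \<notin> K \<longrightarrow> \<zeta> a = None) \<and>
     \<zeta> 1 = Some 1 \<and>
     (\<forall>a\<in>K. \<zeta> a = None \<longleftrightarrow> (a \<noteq> 0 \<and> \<zeta> (inverse a) = Some 0)) \<and>
     (\<forall>a\<in>K. \<forall>b\<in>K. \<zeta> a \<noteq> None \<and> \<zeta> b \<noteq> None \<longrightarrow>
        \<zeta> (a + b) = Some (the (\<zeta> a) + the (\<zeta> b)) \<and>
        \<zeta> (a * b) = Some (the (\<zeta> a) * the (\<zeta> b)))"

definition places :: "'a::field set \<Rightarrow> ('a \<Rightarrow> real option) set" where
  "places K = {\<zeta>. real_place K \<zeta>}"

definition Hsub :: "'a::field set \<Rightarrow> 'a \<Rightarrow> ('a \<Rightarrow> real option) set" where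
  "Hsub K b = {\<zeta> \<in> places K. \<zeta> b \<noteq> None \<and> the (\<zeta> b) > 0}"

text \<open>The topology on M(K) generated by the subbasis {H'(b) | b \<in> K}
  (M(K) itself is added so that the topspace is M(K); note M(K) = H'(1) anyway).\<close>
definition places_top :: "'a::field set \<Rightarrow> ('a \<Rightarrow> real option) topology" where
  "places_top K = topology_generated_by (insert (places K) {Hsub K b | b. b \<in> K})"

definition is_const_ext :: "real set \<Rightarrow> (real poly fract \<Rightarrow> real option)
      \<Rightarrow> (real poly fract \<Rightarrow> real option) \<Rightarrow> bool" where
  "is_const_ext F \<zeta> \<xi> \<longleftrightarrow> \<xi> \<in> places (ratfun_field F) \<and>
     (\<forall>c\<in>F. \<xi> (const_fract c) = Some c) \<and> \<xi> var_y = \<zeta> var_y"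

definition const_ext :: "real set \<Rightarrow> (real poly fract \<Rightarrow> real option)
      \<Rightarrow> (real poly fract \<Rightarrow> real option)" where
  "const_ext F \<zeta> = (THE \<xi>. is_const_ext F \<zeta> \<xi>)"

end

theory Submission
  imports Defs
begin


lemma rsf:
  assumes "real_subfield S"
  shows rsf0: "0 \<in> S" and rsf1: "1 \<in> S"
    and rsf_add: "a \<in> S \<Longrightarrow> b \<in> S \<Longrightarrow> a + b \<in> S"
    and rsf_mult: "a \<in> S \<Longrightarrow> b \<in> S \<Longrightarrow> a * b \<in> S"
    and rsf_uminus: "a \<in> S \<Longrightarrow> - a \<in> S"
    and rsf_inverse: "a \<in> S \<Longrightarrow> inverse a \<in> S"
  using assms unfolding real_subfield_def by auto

lemma rsf_diff: "real_subfield S \<Longrightarrow> a \<in> S \<Longrightarrow> b \<in> S \<Longrightarrow> a - b \<in> S"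
  using rsf_add[of S a "-b"] rsf_uminus[of S b] by simp

lemma rsf_divide: "real_subfield S \<Longrightarrow> a \<in> S \<Longrightarrow> b \<in> S \<Longrightarrow> a / b \<in> S"
  using rsf_mult[of S a "inverse b"] rsf_inverse[of S b] by (simp add: divide_inverse)

lemma rsf_nat: "real_subfield S \<Longrightarrow> real n \<in> S"
  by (induction n) (auto intro: rsf0 rsf_add rsf1)

lemma rsf_int: "real_subfield S \<Longrightarrow> real_of_int n \<in> S"
proof (cases "n \<ge> 0")
  case True
  assume "real_subfield S"
  then have "real (nat n) \<in> S" by (rule rsf_nat)
  then show ?thesis using True by simp
next
  case False
  assume s: "real_subfield S"
  then have "- real (nat (-n)) \<in> S" by (intro rsf_uminus rsf_nat)
  then show ?thesis using False by simp
qed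

lemma rsf_rat: "real_subfield S \<Longrightarrow> r \<in> \<rat> \<Longrightarrow> r \<in> S"
  by (erule Rats_cases') (auto intro!: rsf_divide rsf_int)

lemma rsf_sum: assumes "real_subfield S" "finite A" shows "(\<forall>i\<in>A. f i \<in> S) \<longrightarrow> sum f A \<in> S"
  using assms(2) by (induction A rule: finite_induct) (auto intro: rsf0 rsf_add assms(1))

definition FP :: "real set \<Rightarrow> real poly \<Rightarrow> bool" where
  "FP S p \<longleftrightarrow> (\<forall>i. coeff p i \<in> S)"

lemma FP_0: "real_subfield S \<Longrightarrow> FP S 0"
  by (simp add: FP_def rsf0)

lemma FP_const: "real_subfield S \<Longrightarrow> c \<in> S \<Longrightarrow> FP S [:c:]"
  by (simp add: FP_def coeff_pCons rsf0 split: nat.split)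

lemma FP_1: "real_subfield S \<Longrightarrow> FP S 1"
  using FP_const[of S 1] by (simp add: rsf1 one_pCons)

lemma FP_pCons: "real_subfield S \<Longrightarrow> c \<in> S \<Longrightarrow> FP S p \<Longrightarrow> FP S (pCons c p)"
  by (simp add: FP_def coeff_pCons split: nat.split)

lemma FP_pConsD: "FP S (pCons c p) \<Longrightarrow> c \<in> S \<and> FP S p"
  unfolding FP_def by (metis coeff_pCons_0 coeff_pCons_Suc)

lemma FP_add: "real_subfield S \<Longrightarrow> FP S p \<Longrightarrow> FP S q \<Longrightarrow> FP S (p + q)"
  by (simp add: FP_def rsf_add)

lemma FP_uminus: "real_subfield S \<Longrightarrow> FP S p \<Longrightarrow> FP S (- p)"
  by (simp add: FP_def rsf_uminus)

lemma FP_diff: "real_subfield S \<Longrightarrow> FP S p \<Longrightarrow> FP S q \<Longrightarrow> FP S (p - q)"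
  by (simp add: FP_def rsf_diff)

lemma FP_mult: "real_subfield S \<Longrightarrow> FP S p \<Longrightarrow> FP S q \<Longrightarrow> FP S (p * q)"
  unfolding FP_def coeff_mult by (auto intro!: rsf_sum[rule_format] rsf_mult)

lemma FP_smult: "real_subfield S \<Longrightarrow> c \<in> S \<Longrightarrow> FP S p \<Longrightarrow> FP S (smult c p)"
  by (simp add: FP_def rsf_mult)

lemma FP_monom: "real_subfield S \<Longrightarrow> c \<in> S \<Longrightarrow> FP S (monom c n)"
  by (simp add: FP_def coeff_monom rsf0)

lemma FP_X: "real_subfield S \<Longrightarrow> FP S [:0,1:]"
  by (intro FP_pCons FP_const rsf0 rsf1)

lemma FP_power: "real_subfield S \<Longrightarrow> FP S p \<Longrightarrow> FP S (p ^ n)"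
  by (induction n) (auto intro: FP_1 FP_mult)

lemma FP_lead: "FP S p \<Longrightarrow> lead_coeff p \<in> S"
  by (simp add: FP_def)

section \<open>Division with remainder and Bezout inside S[y]\<close>

lemma FP_divmod:
  assumes S: "real_subfield S" and h: "FP S h" "h \<noteq> 0"
  shows "FP S p \<Longrightarrow> \<exists>s r. FP S s \<and> FP S r \<and> p = s * h + r \<and> (r = 0 \<or> degree r < degree h)"
proof (induction "if p = 0 then 0 else Suc (degree p)" arbitrary: p rule: less_induct)
  case less
  show ?case
  proof (cases "p = 0 \<or> degree p < degree h")
    case True
    then show ?thesis using less.prems FP_0[OF S] by (intro exI[of _ 0] exI[of _ p]) auto
  next
    case False
    then have p0: "p \<noteq> 0" and dg: "degree h \<le> degree p" by auto
    define k where "k = degree p - degree h"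
    define c where "c = lead_coeff p / lead_coeff h"
    define p' where "p' = p - monom c k * h"
    have hl: "lead_coeff h \<noteq> 0" using h by simp
    have FPp': "FP S p'" unfolding p'_def c_def
      by (intro FP_diff FP_mult FP_monom rsf_divide FP_lead less.prems h S)
    have dm: "degree (monom c k * h) \<le> degree p"
      by (metis add.commute degree_monom_le degree_mult_le dg k_def le_add_diff_inverse2 add_le_mono le_refl order_trans)
    have deg1: "degree p' \<le> degree p" unfolding p'_def
      using degree_diff_le dm by blast
    have "coeff (monom c k * h) (degree p) = c * lead_coeff h"
      using dg by (simp add: coeff_monom_mult k_def)
    then have cz: "coeff p' (degree p) = 0" unfolding p'_def c_def using hl by simp
    have lt: "(if p' = 0 then 0 else Suc (degree p')) < (if p = 0 then 0 else Suc (degree p))"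
    proof (cases "p' = 0")
      case False
      then have "degree p' \<noteq> degree p" using cz by (metis leading_coeff_0_iff)
      then show ?thesis using deg1 p0 False by simp
    qed (simp add: p0)
    obtain s r where sr: "FP S s" "FP S r" "p' = s * h + r" "r = 0 \<or> degree r < degree h"
      using less.hyps[OF lt FPp'] by blast
    have "p = (s + monom c k) * h + r" using sr(3) unfolding p'_def by (simp add: algebra_simps)
    moreover have "FP S (s + monom c k)" unfolding c_def
      by (intro FP_add FP_monom rsf_divide FP_lead less.prems h S sr(1))
    ultimately show ?thesis using sr by blast
  qed
qed

lemma FP_bezout_rep:
  assumes S: "real_subfield S" and p: "FP S p" and q: "FP S q" "q \<noteq> 0"
  shows "\<exists>s t f g. FP S s \<and> FP S t \<and> t \<noteq> 0 \<and> FP S f \<and> FP S g \<and>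
           Fract p q = Fract s t \<and> f * s + g * t = 1"
proof -
  define I where "I = {h. h \<noteq> 0 \<and> (\<exists>f g. FP S f \<and> FP S g \<and> h = f * p + g * q)}"
  have qI: "q \<in> I" unfolding I_def using q by (intro CollectI conjI exI[of _ 0] exI[of _ 1]) (auto simp: FP_0 FP_1 S)
  define n where "n = (LEAST n. \<exists>h\<in>I. degree h = n)"
  have "\<exists>h\<in>I. degree h = n" unfolding n_def by (rule LeastI_ex) (use qI in blast)
  then obtain h where hI: "h \<in> I" and hn: "degree h = n" by blast
  have minI: "\<And>h'. h' \<in> I \<Longrightarrow> n \<le> degree h'" unfolding n_def by (rule Least_le) blast
  obtain f g where fg: "FP S f" "FP S g" "h = f * p + g * q" and h0: "h \<noteq> 0" using hI unfolding I_def by blast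
  have FPh: "FP S h" using fg by (simp add: FP_add FP_mult S p q)
  have divides: "\<exists>s. FP S s \<and> x = s * h" if x: "FP S x" "x = a * p + b * q" "FP S a" "FP S b" for x a b
  proof -
    obtain s r where sr: "FP S s" "FP S r" "x = s * h + r" "r = 0 \<or> degree r < degree h"
      using FP_divmod[OF S FPh h0 x(1)] by blast
    have "r = (a - s * f) * p + (b - s * g) * q" using sr(3) x(2) fg(3) by (simp add: algebra_simps)
    moreover have "FP S (a - s * f)" "FP S (b - s * g)" using sr fg x by (auto intro!: FP_diff FP_mult S)
    ultimately have "r \<noteq> 0 \<Longrightarrow> r \<in> I" unfolding I_def by blast
    then have "r = 0" using minI sr(4) hn by fastforce
    then show ?thesis using sr by auto
  qed
  obtain s where s: "FP S s" "p = s * h"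
    using divides[of p 1 0] p by (auto simp: FP_0 FP_1 S)
  obtain t where t: "FP S t" "q = t * h"
    using divides[of q 0 1] q by (auto simp: FP_0 FP_1 S)
  have t0: "t \<noteq> 0" using t q by auto
  have "Fract p q = Fract s t" using t0 q h0 s t by (simp add: eq_fract)
  moreover have "(f * s + g * t) * h = 1 * h" using fg(3) s t by (simp add: algebra_simps)
  then have "f * s + g * t = 1" using h0 by (metis mult_cancel_right)
  ultimately show ?thesis using s t t0 fg by blast
qed



abbreviation fr :: "real poly \<Rightarrow> real poly fract" where "fr p \<equiv> Fract p 1"

lemma fr_add: "fr (p + q) = fr p + fr q" by simp
lemma fr_mult: "fr (p * q) = fr p * fr q" by simp
lemma fr_1: "fr 1 = 1" by (simp add: fract_collapse)
lemma fr_0: "fr 0 = 0" by (simp add: fract_collapse)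
lemma Fract_as: "Fract s t = fr s * inverse (fr t)" by simp

lemma fr_eq_0: "fr p = 0 \<longleftrightarrow> p = 0"
  by (simp add: Zero_fract_def eq_fract)

lemma Fract_eq_0: "t \<noteq> 0 \<Longrightarrow> Fract s t = 0 \<longleftrightarrow> s = 0"
  by (simp add: Zero_fract_def eq_fract)

definition subf :: "'a::field set \<Rightarrow> bool" where
  "subf K \<longleftrightarrow> 0 \<in> K \<and> 1 \<in> K \<and> (\<forall>a\<in>K. \<forall>b\<in>K. a + b \<in> K \<and> a * b \<in> K) \<and>
     (\<forall>a\<in>K. - a \<in> K \<and> inverse a \<in> K)"

lemma ratfun_field_memI: "FP S p \<Longrightarrow> FP S q \<Longrightarrow> q \<noteq> 0 \<Longrightarrow> Fract p q \<in> ratfun_field S"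
  unfolding ratfun_field_def FP_def by blast

lemma ratfun_field_memE:
  assumes "b \<in> ratfun_field S"
  obtains p q where "FP S p" "FP S q" "q \<noteq> 0" "b = Fract p q"
  using assms unfolding ratfun_field_def FP_def by blast

lemma fr_in: "FP S p \<Longrightarrow> real_subfield S \<Longrightarrow> fr p \<in> ratfun_field S"
  by (intro ratfun_field_memI FP_1) auto

lemma subf_ratfun: assumes S: "real_subfield S" shows "subf (ratfun_field S)"
  unfolding subf_def
proof (intro conjI ballI)
  show "0 \<in> ratfun_field S" using fr_in[OF FP_0[OF S] S] by (simp add: fr_0)
  show "1 \<in> ratfun_field S" using fr_in[OF FP_1[OF S] S] by (simp add: fr_1)
  fix a assume "a \<in> ratfun_field S"
  then obtain p q where a: "FP S p" "FP S q" "q \<noteq> 0" "a = Fract p q" by (rule ratfun_field_memE)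
  show "- a \<in> ratfun_field S" using a by (auto intro!: ratfun_field_memI FP_uminus S)
  show "inverse a \<in> ratfun_field S"
  proof (cases "p = 0")
    case True
    then show ?thesis using a fr_in[OF FP_0[OF S] S] by (simp add: fract_collapse)
  next
    case False
    then show ?thesis using a by (auto intro!: ratfun_field_memI)
  qed
  fix b assume "b \<in> ratfun_field S"
  then obtain r s where b: "FP S r" "FP S s" "s \<noteq> 0" "b = Fract r s" by (rule ratfun_field_memE)
  show "a + b \<in> ratfun_field S" using a b by (auto intro!: ratfun_field_memI FP_add FP_mult S)
  show "a * b \<in> ratfun_field S" using a b by (auto intro!: ratfun_field_memI FP_mult S)
qed

lemma ratfun_mono: "S \<subseteq> T \<Longrightarrow> ratfun_field S \<subseteq> ratfun_field T"
  unfolding ratfun_field_def by blast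

lemma const_in: "real_subfield S \<Longrightarrow> c \<in> S \<Longrightarrow> const_fract c \<in> ratfun_field S"
  unfolding const_fract_def by (intro fr_in FP_const)

lemma var_in: "real_subfield S \<Longrightarrow> var_y \<in> ratfun_field S"
  unfolding var_y_def by (intro fr_in FP_X)

lemma const_add: "const_fract (c + d) = const_fract c + const_fract d"
  by (simp add: const_fract_def)
lemma const_mult: "const_fract (c * d) = const_fract c * const_fract d"
  by (simp add: const_fract_def mult.commute)
lemma const_uminus: "const_fract (- c) = - const_fract c"
  by (simp add: const_fract_def)
lemma const_1: "const_fract 1 = 1"
  by (simp add: const_fract_def fr_1 one_pCons[symmetric])
lemma const_0: "const_fract 0 = 0"
  by (simp add: const_fract_def fr_0)
lemma const_inverse: "const_fract (inverse c) = inverse (const_fract c)"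
  by (cases "c = 0") (simp_all add: const_fract_def fract_collapse eq_fract)
lemma const_eq_0: "const_fract c = 0 \<longleftrightarrow> c = 0"
  by (simp add: const_fract_def fr_eq_0)
lemma const_nat: "const_fract (real n) = of_nat n"
  by (induction n) (simp_all add: const_0 const_add const_1)

section \<open>Generic facts on places\<close>

lemma subfD:
  assumes "subf K"
  shows "0 \<in> K" "1 \<in> K" "a \<in> K \<Longrightarrow> b \<in> K \<Longrightarrow> a + b \<in> K" "a \<in> K \<Longrightarrow> b \<in> K \<Longrightarrow> a * b \<in> K"
    "a \<in> K \<Longrightarrow> - a \<in> K" "a \<in> K \<Longrightarrow> inverse a \<in> K"
  using assms unfolding subf_def by auto

locale place =
  fixes K :: "'a::field set" and z :: "'a \<Rightarrow> real option"
  assumes K: "subf K" and pl: "real_place K z"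
begin

lemma outside: "a \<notin> K \<Longrightarrow> z a = None" using pl unfolding real_place_def by auto
lemma one: "z 1 = Some 1" using pl unfolding real_place_def by auto
lemma inf_iff: "a \<in> K \<Longrightarrow> z a = None \<longleftrightarrow> (a \<noteq> 0 \<and> z (inverse a) = Some 0)"
  using pl unfolding real_place_def by auto
lemma add: "a \<in> K \<Longrightarrow> b \<in> K \<Longrightarrow> z a = Some u \<Longrightarrow> z b = Some v \<Longrightarrow> z (a + b) = Some (u + v)"
  using pl unfolding real_place_def by force
lemma mult: "a \<in> K \<Longrightarrow> b \<in> K \<Longrightarrow> z a = Some u \<Longrightarrow> z b = Some v \<Longrightarrow> z (a * b) = Some (u * v)"
  using pl unfolding real_place_def by force

lemma zero: "z 0 = Some 0"
proof -
  have "z 0 \<noteq> None" using inf_iff[of 0] subfD[OF K] by auto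
  then obtain u where u: "z 0 = Some u" by auto
  have "z (0 + 0) = Some (u + u)" using add[OF _ _ u u] subfD[OF K] by auto
  then show ?thesis using u by simp
qed

lemma minus_one: "z (- 1) = Some (- 1)"
proof -
  have m: "- 1 \<in> K" using subfD[OF K] by auto
  have "z (- 1) \<noteq> None" using inf_iff[OF m] one by auto
  then obtain u where u: "z (-1) = Some u" by auto
  have "z (- 1 + 1) = Some (u + 1)" using add[OF m _ u one] subfD[OF K] by auto
  then show ?thesis using u zero by simp
qed

lemma uminus: "a \<in> K \<Longrightarrow> z a = Some u \<Longrightarrow> z (- a) = Some (- u)"
  using mult[OF _ _ minus_one, of a u] subfD[OF K] by simp

lemma diff: "a \<in> K \<Longrightarrow> b \<in> K \<Longrightarrow> z a = Some u \<Longrightarrow> z b = Some v \<Longrightarrow> z (a - b) = Some (u - v)"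
  using add[of a "-b" u "-v"] uminus[of b v] subfD[OF K] by simp

lemma inverse_fin: assumes a: "a \<in> K" "z a = Some u" "u \<noteq> 0" shows "z (inverse a) = Some (inverse u)"
proof -
  have a0: "a \<noteq> 0" using a zero by auto
  have ia: "inverse a \<in> K" using a subfD[OF K] by auto
  have "z (inverse a) \<noteq> None" using inf_iff[OF ia] a by auto
  then obtain w where w: "z (inverse a) = Some w" by auto
  have "z (a * inverse a) = Some (u * w)" using mult[OF a(1) ia a(2) w] .
  then have "u * w = 1" using one a0 by simp
  then show ?thesis using w by (metis inverse_unique)
qed

lemma inverse_zero: "a \<in> K \<Longrightarrow> a \<noteq> 0 \<Longrightarrow> z a = Some 0 \<Longrightarrow> z (inverse a) = None"
  using inf_iff[of "inverse a"] subfD(6)[OF K, of a] by simp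

lemma inverse_inf: "a \<in> K \<Longrightarrow> z a = None \<Longrightarrow> z (inverse a) = Some 0"
  using inf_iff by blast

lemma power: "a \<in> K \<Longrightarrow> z a = Some u \<Longrightarrow> z (a ^ n) = Some (u ^ n)"
proof (induction n)
  case 0 then show ?case using one by simp
next
  case (Suc n)
  have "a ^ n \<in> K" proof (induction n) qed (use subfD[OF K] Suc in auto)
  then show ?case using mult[OF Suc.prems(1) _ Suc.prems(2) Suc.IH[OF Suc.prems]] by simp
qed

lemma mult_None: assumes "a \<in> K" "b \<in> K" "z a = None" "z b = Some v" "v \<noteq> 0" shows "z (a * b) = None"
proof -
  have i: "inverse (a * b) = inverse a * inverse b" by (simp add: field_simps)
  have "z (inverse (a*b)) = Some (0 * inverse v)"
    unfolding i using assms inverse_inf inverse_fin subfD[OF K] by (intro mult) auto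
  moreover have "a * b \<noteq> 0" using assms zero by auto
  ultimately show ?thesis using inf_iff[of "a*b"] subfD[OF K] assms by simp
qed

end

lemma place_places: "subf K \<Longrightarrow> \<zeta> \<in> places K \<Longrightarrow> place K \<zeta>"
  unfolding places_def place_def by auto

definition restr :: "'a set \<Rightarrow> ('a \<Rightarrow> real option) \<Rightarrow> ('a \<Rightarrow> real option)" where
  "restr L z = (\<lambda>b. if b \<in> L then z b else None)"

lemma restr_place:
  assumes "place K z" "subf L" "L \<subseteq> K"
  shows "real_place L (restr L z)"
proof -
  interpret place K z by fact
  show ?thesis unfolding real_place_def restr_def
    using subfD[OF assms(2)] assms(3) one inf_iff add mult subsetD by (auto simp: subsetD) (blast+)?
qed



section \<open>The place at a finite point\<close>

lemma ratio_eq: fixes x w x' w' :: real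
  assumes "x * w' = x' * w" "w \<noteq> 0" "w' \<noteq> 0" shows "x' / w' = x / w"
  using assms by (simp add: field_simps)


definition Pa :: "real \<Rightarrow> real poly fract \<Rightarrow> real option" where
  "Pa a b = (if \<exists>p q. b = Fract p q \<and> poly q a \<noteq> 0
     then Some (THE v. \<exists>p q. b = Fract p q \<and> poly q a \<noteq> 0 \<and> v = poly p a / poly q a)
     else None)"

lemma Pa_wd: fixes p q p' q' :: "real poly" assumes "Fract p q = Fract p' q'" "poly q a \<noteq> 0" "poly q' a \<noteq> 0"
  shows "poly p' a / poly q' a = poly p a / poly q a"
proof -
  have "q \<noteq> 0" "q' \<noteq> 0" using assms by auto
  then have "p * q' = p' * q" using assms by (simp add: eq_fract)
  then have e: "poly p a * poly q' a = poly p' a * poly q a" by (metis poly_mult)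
  show ?thesis using ratio_eq[OF e assms(2,3)] .
qed

lemma Pa_eq: assumes "b = Fract p q" "poly q a \<noteq> 0" shows "Pa a b = Some (poly p a / poly q a)"
proof -
  have "(THE v. \<exists>p q. b = Fract p q \<and> poly q a \<noteq> 0 \<and> v = poly p a / poly q a) = poly p a / poly q a"
    apply (rule the_equality)
    using assms apply blast
    using assms Pa_wd by metis
  then show ?thesis unfolding Pa_def using assms by metis
qed

lemma Pa_None: "\<not> (\<exists>p q. b = Fract p q \<and> poly q a \<noteq> 0) \<Longrightarrow> Pa a b = None"
  unfolding Pa_def by auto

lemma Pa_rep: "\<exists>p q. b = Fract p q \<and> q \<noteq> 0 \<and> (poly p a \<noteq> 0 \<or> poly q a \<noteq> 0)"
proof -
  obtain p q where b: "b = Fract p q" "q \<noteq> 0" by (cases b) auto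
  show ?thesis
  proof (cases "p = 0")
    case True
    then show ?thesis using b by (intro exI[of _ 0] exI[of _ 1]) (simp add: eq_fract)
  next
    case False
    define X where "X = [:-a, 1:]"
    obtain p1 where p1: "p = X ^ order a p * p1" "\<not> X dvd p1" using order_decomp[OF False] X_def by blast
    obtain q1 where q1: "q = X ^ order a q * q1" "\<not> X dvd q1" using order_decomp[OF b(2)] X_def by blast
    obtain i j where ij: "i = order a p" "j = order a q" by blast
    have pi: "p = X ^ i * p1" and qj: "q = X ^ j * q1" using p1 q1 ij by auto
    have np1: "poly p1 a \<noteq> 0" "poly q1 a \<noteq> 0" using p1 q1 by (auto simp: poly_eq_0_iff_dvd X_def)
    have X0: "X \<noteq> 0" by (simp add: X_def)
    have p10: "p1 \<noteq> 0" "q1 \<noteq> 0" using np1 by auto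
    show ?thesis
    proof (cases "j \<le> i")
      case True
      define k where "k = i - j"
      have e: "X ^ i = X ^ k * X ^ j" unfolding k_def using True by (simp flip: power_add)
      have "p * q1 = (X ^ k * p1) * q" unfolding pi qj e by (simp add: algebra_simps)
      then have "b = Fract (X ^ k * p1) q1"
        using b p10 by (simp add: eq_fract)
      then show ?thesis using np1 p10 by blast
    next
      case False
      define k where "k = j - i"
      have e: "X ^ j = X ^ k * X ^ i" unfolding k_def using False by (simp flip: power_add)
      have "p * (X ^ k * q1) = p1 * q" unfolding pi qj e by (simp add: algebra_simps)
      then have "b = Fract p1 (X ^ k * q1)"
        using b p10 X0 by (simp add: eq_fract)
      then show ?thesis using np1 p10 X0 by (intro exI[of _ p1] exI[of _ "X^k*q1"]) auto
    qed
  qed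
qed

lemma Pa_fin: assumes "Pa a b \<noteq> None" shows "\<exists>p q. b = Fract p q \<and> poly q a \<noteq> 0"
proof (rule ccontr)
  assume n: "\<not> (\<exists>p q. b = Fract p q \<and> poly q a \<noteq> 0)"
  from Pa_None[OF n] assms show False by simp
qed

lemma Pa_inf_iff: "Pa a b = None \<longleftrightarrow> (b \<noteq> 0 \<and> Pa a (inverse b) = Some 0)"
proof
  assume N: "Pa a b = None"
  have nr: "\<not> (\<exists>p q. b = Fract p q \<and> poly q a \<noteq> 0)"
  proof
    assume "\<exists>p q. b = Fract p q \<and> poly q a \<noteq> 0"
    then obtain p q where "b = Fract p q" "poly q a \<noteq> 0" by blast
    from Pa_eq[OF this] N show False by simp
  qed
  obtain p q where pq: "b = Fract p q" "q \<noteq> 0" "poly p a \<noteq> 0 \<or> poly q a \<noteq> 0" using Pa_rep by blast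
  have qa: "poly q a = 0" using nr pq by blast
  then have pa: "poly p a \<noteq> 0" using pq by blast
  have "b \<noteq> 0"
  proof
    assume "b = 0" then have "b = Fract 0 1" by (simp add: Zero_fract_def)
    then show False using nr by fastforce
  qed
  moreover have "inverse b = Fract q p" using pq by simp
  from Pa_eq[OF this pa] have "Pa a (inverse b) = Some 0" using qa by simp
  ultimately show "b \<noteq> 0 \<and> Pa a (inverse b) = Some 0" by blast
next
  assume A: "b \<noteq> 0 \<and> Pa a (inverse b) = Some 0"
  show "Pa a b = None"
  proof (rule Pa_None, rule notI)
    assume "\<exists>p q. b = Fract p q \<and> poly q a \<noteq> 0"
    then obtain r s where rs: "b = Fract r s" "poly s a \<noteq> 0" by blast
    have s0: "s \<noteq> 0" using rs by auto
    have r0: "r \<noteq> 0" using A rs s0 by (auto simp: Fract_eq_0)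
    have ib: "inverse b = Fract s r" using rs by simp
    obtain p q where pq: "inverse b = Fract p q" "poly q a \<noteq> 0" using Pa_fin[of a "inverse b"] A by auto
    from Pa_eq[OF pq] have pa: "poly p a = 0" using A pq by simp
    have q0: "q \<noteq> 0" using pq(2) by auto
    have "s * q = p * r" using pq ib eq_fract(1)[OF r0 q0, of s p] by simp
    then have "poly s a * poly q a = poly p a * poly r a" by (metis poly_mult)
    then show False using pa rs pq by simp
  qed
qed

lemma Pa_add_mult: assumes "Pa a b = Some u" "Pa a c = Some v"
  shows "Pa a (b + c) = Some (u + v)" "Pa a (b * c) = Some (u * v)"
proof -
  obtain p q where pq: "b = Fract p q" "poly q a \<noteq> 0" using Pa_fin[of a b] assms by auto
  obtain r s where rs: "c = Fract r s" "poly s a \<noteq> 0" using Pa_fin[of a c] assms by auto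
  have q0: "q \<noteq> 0" "s \<noteq> 0" using pq rs by auto
  have u: "u = poly p a / poly q a" using Pa_eq[OF pq] assms by simp
  have v: "v = poly r a / poly s a" using Pa_eq[OF rs] assms by simp
  have qs: "poly (q * s) a \<noteq> 0" using pq rs by simp
  have "b + c = Fract (p * s + r * q) (q * s)" using pq(1) rs(1) q0 by simp
  from Pa_eq[OF this qs] have "Pa a (b + c) = Some ((poly p a * poly s a + poly r a * poly q a) / (poly q a * poly s a))"
    by simp
  also have "(poly p a * poly s a + poly r a * poly q a) / (poly q a * poly s a) = u + v"
    using pq(2) rs(2) unfolding u v by (simp add: field_simps)
  finally show "Pa a (b + c) = Some (u + v)" .
  have "b * c = Fract (p * r) (q * s)" using pq(1) rs(1) q0 by simp
  from Pa_eq[OF this qs] show "Pa a (b * c) = Some (u * v)"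
    unfolding u v by simp
qed

lemma Pa_place: "real_place UNIV (Pa a)"
  unfolding real_place_def
  using Pa_eq[of 1 1 1 a] Pa_inf_iff Pa_add_mult by (auto simp: fract_collapse)

lemma Pa_fr: "Pa a (fr p) = Some (poly p a)"
  using Pa_eq[of "fr p" p 1 a] by simp

section \<open>The place at infinity\<close>

lemma coeff_mult_le: assumes "degree p \<le> m" "degree q \<le> n"
  shows "coeff (p * q) (m + n) = coeff p m * coeff q n"
proof -
  have "coeff (p * q) (m + n) = (\<Sum>i\<le>m + n. coeff p i * coeff q (m + n - i))" by (rule coeff_mult)
  also have "\<dots> = coeff p m * coeff q (m + n - m)"
  proof (rule sum.remove[THEN trans])
    show "finite {..m+n}" by simp
    show "m \<in> {..m+n}" by simp
    have "(\<Sum>i\<in>{..m + n} - {m}. coeff p i * coeff q (m + n - i)) = 0"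
    proof (rule sum.neutral, rule ballI)
      fix i assume i: "i \<in> {..m + n} - {m}"
      show "coeff p i * coeff q (m + n - i) = 0"
      proof (cases "i < m")
        case True
        then have "degree q < m + n - i" using assms by linarith
        then show ?thesis by (simp add: coeff_eq_0)
      next
        case False
        then have "degree p < i" using i assms by auto
        then show ?thesis by (simp add: coeff_eq_0)
      qed
    qed
    then show "coeff p m * coeff q (m + n - m) + (\<Sum>i\<in>{..m + n} - {m}. coeff p i * coeff q (m + n - i)) = coeff p m * coeff q (m + n - m)" by simp
  qed
  finally show ?thesis by simp
qed

definition Pinf :: "real poly fract \<Rightarrow> real option" where
  "Pinf b = (if \<exists>p q. b = Fract p q \<and> q \<noteq> 0 \<and> degree p \<le> degree q
     then Some (THE v. \<exists>p q. b = Fract p q \<and> q \<noteq> 0 \<and> degree p \<le> degree q \<and> v = coeff p (degree q) / lead_coeff q)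
     else None)"

lemma Pinf_wd: fixes p q p' q' :: "real poly" assumes "Fract p q = Fract p' q'" "q \<noteq> 0" "degree p \<le> degree q" "q' \<noteq> 0" "degree p' \<le> degree q'"
  shows "coeff p' (degree q') / lead_coeff q' = coeff p (degree q) / lead_coeff q"
proof -
  have e: "p * q' = p' * q" using assms(1) eq_fract(1)[OF assms(2) assms(4)] by simp
  have "coeff p (degree q) * lead_coeff q' = coeff (p * q') (degree q + degree q')"
    using coeff_mult_le[of p "degree q" q' "degree q'"] assms(3) by simp
  also have "\<dots> = coeff (p' * q) (degree q' + degree q)" unfolding e by (simp only: add.commute)
  also have "\<dots> = coeff p' (degree q') * lead_coeff q"
    using coeff_mult_le[of p' "degree q'" q "degree q"] assms(5) by simp
  finally have e2: "coeff p (degree q) * lead_coeff q' = coeff p' (degree q') * lead_coeff q" .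
  show ?thesis by (rule ratio_eq[OF e2]) (use assms(2,4) in auto)
qed

lemma Pinf_eq: assumes "b = Fract p q" "q \<noteq> 0" "degree p \<le> degree q"
  shows "Pinf b = Some (coeff p (degree q) / lead_coeff q)"
proof -
  have "(THE v. \<exists>p q. b = Fract p q \<and> q \<noteq> 0 \<and> degree p \<le> degree q \<and> v = coeff p (degree q) / lead_coeff q) = coeff p (degree q) / lead_coeff q"
    apply (rule the_equality)
    using assms apply blast
    using assms Pinf_wd by metis
  then show ?thesis unfolding Pinf_def using assms by metis
qed

lemma Pinf_None: "\<not> (\<exists>p q. b = Fract p q \<and> q \<noteq> 0 \<and> degree p \<le> degree q) \<Longrightarrow> Pinf b = None"
  unfolding Pinf_def by auto

lemma Pinf_fin: assumes "Pinf b \<noteq> None" shows "\<exists>p q. b = Fract p q \<and> q \<noteq> 0 \<and> degree p \<le> degree q"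
proof (rule ccontr)
  assume n: "\<not> (\<exists>p q. b = Fract p q \<and> q \<noteq> 0 \<and> degree p \<le> degree q)"
  from Pinf_None[OF n] assms show False by simp
qed

lemma Pinf_inf_iff: "Pinf b = None \<longleftrightarrow> (b \<noteq> 0 \<and> Pinf (inverse b) = Some 0)"
proof
  assume N: "Pinf b = None"
  have nr: "\<not> (\<exists>p q. b = Fract p q \<and> q \<noteq> 0 \<and> degree p \<le> degree q)"
  proof
    assume "\<exists>p q. b = Fract p q \<and> q \<noteq> 0 \<and> degree p \<le> degree q"
    then obtain p q where "b = Fract p q" "q \<noteq> 0" "degree p \<le> degree q" by blast
    from Pinf_eq[OF this] N show False by simp
  qed
  obtain p q where pq: "b = Fract p q" "q \<noteq> 0" by (cases b) auto
  have dg: "degree q < degree p"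
  proof (rule ccontr)
    assume "\<not> degree q < degree p"
    then have "degree p \<le> degree q" by simp
    then show False using nr pq by blast
  qed
  then have p0: "p \<noteq> 0" by auto
  have "b \<noteq> 0"
  proof
    assume "b = 0" then have "b = Fract 0 1" by (simp add: Zero_fract_def)
    then show False using nr by fastforce
  qed
  moreover have "inverse b = Fract q p" using pq by simp
  from Pinf_eq[OF this p0] have "Pinf (inverse b) = Some 0" using dg by (simp add: coeff_eq_0)
  ultimately show "b \<noteq> 0 \<and> Pinf (inverse b) = Some 0" by blast
next
  assume A: "b \<noteq> 0 \<and> Pinf (inverse b) = Some 0"
  show "Pinf b = None"
  proof (rule Pinf_None, rule notI)
    assume "\<exists>p q. b = Fract p q \<and> q \<noteq> 0 \<and> degree p \<le> degree q"
    then obtain r s where rs: "b = Fract r s" "s \<noteq> 0" "degree r \<le> degree s" by blast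
    have r0: "r \<noteq> 0" using A rs by (auto simp: Fract_eq_0)
    have ib: "inverse b = Fract s r" using rs by simp
    obtain p q where pq: "inverse b = Fract p q" "q \<noteq> 0" "degree p \<le> degree q"
      using Pinf_fin[of "inverse b"] A by auto
    from Pinf_eq[OF pq] have pa: "coeff p (degree q) = 0" using A pq by simp
    have e: "s * q = p * r" using pq ib eq_fract(1)[OF r0 pq(2), of s p] by simp
    have "lead_coeff (s * q) = coeff (s * q) (degree s + degree q)"
      using rs(2) pq(2) by (simp add: degree_mult_eq)
    also have "\<dots> = coeff (p * r) (degree s + degree q)" using e by simp
    also have "\<dots> = coeff p (degree q) * coeff r (degree s)"
      using coeff_mult_le[of p "degree q" r "degree s"] pq rs by (simp add: add.commute)
    finally have "lead_coeff (s * q) = 0" using pa by simp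
    then show False using rs pq by simp
  qed
qed

lemma Pinf_add_mult: assumes "Pinf b = Some u" "Pinf c = Some v"
  shows "Pinf (b + c) = Some (u + v)" "Pinf (b * c) = Some (u * v)"
proof -
  obtain p q where pq: "b = Fract p q" "q \<noteq> 0" "degree p \<le> degree q" using Pinf_fin[of b] assms by auto
  obtain r s where rs: "c = Fract r s" "s \<noteq> 0" "degree r \<le> degree s" using Pinf_fin[of c] assms by auto
  have u: "u = coeff p (degree q) / lead_coeff q" using Pinf_eq[OF pq] assms by simp
  have v: "v = coeff r (degree s) / lead_coeff s" using Pinf_eq[OF rs] assms by simp
  have qs0: "q * s \<noteq> 0" using pq rs by simp
  have dqs: "degree (q * s) = degree q + degree s" using pq rs by (simp add: degree_mult_eq)
  have lqs0: "lead_coeff (q * s) = lead_coeff q * lead_coeff s" by (simp add: lead_coeff_mult)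
  have lqs: "coeff (q * s) (degree q + degree s) = lead_coeff q * lead_coeff s" using lqs0 dqs by simp
  have c1: "coeff (p * s) (degree q + degree s) = coeff p (degree q) * lead_coeff s"
    using coeff_mult_le[of p "degree q" s "degree s"] pq by simp
  have c2: "coeff (r * q) (degree q + degree s) = coeff r (degree s) * lead_coeff q"
    using coeff_mult_le[of r "degree s" q "degree q"] rs by (simp add: add.commute)
  have c3: "coeff (p * r) (degree q + degree s) = coeff p (degree q) * coeff r (degree s)"
    using coeff_mult_le[of p "degree q" r "degree s"] pq rs by simp
  have "degree (p * s) \<le> degree q + degree s"
    using degree_mult_le[of p s] pq(3) by linarith
  moreover have "degree (r * q) \<le> degree q + degree s"
    using degree_mult_le[of r q] rs(3) by linarith
  ultimately have d1: "degree (p * s + r * q) \<le> degree (q * s)"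
    unfolding dqs using degree_add_le by blast
  have d2: "degree (p * r) \<le> degree (q * s)"
    unfolding dqs using degree_mult_le[of p r] pq(3) rs(3) by linarith
  have lq: "lead_coeff q \<noteq> 0" "lead_coeff s \<noteq> 0" using pq rs by auto
  have "b + c = Fract (p * s + r * q) (q * s)" using pq(1,2) rs(1,2) by simp
  from Pinf_eq[OF this qs0 d1]
  have "Pinf (b + c) = Some ((coeff p (degree q) * lead_coeff s + coeff r (degree s) * lead_coeff q) / (lead_coeff q * lead_coeff s))"
    unfolding dqs lqs coeff_add c1 c2 .
  also have "(coeff p (degree q) * lead_coeff s + coeff r (degree s) * lead_coeff q) / (lead_coeff q * lead_coeff s) = u + v"
    unfolding u v using lq by (simp add: field_simps)
  finally show "Pinf (b + c) = Some (u + v)" .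
  have "b * c = Fract (p * r) (q * s)" using pq(1,2) rs(1,2) by simp
  from Pinf_eq[OF this qs0 d2] show "Pinf (b * c) = Some (u * v)"
    unfolding dqs lqs c3 u v by simp
qed

lemma Pinf_place: "real_place UNIV Pinf"
  unfolding real_place_def
  using Pinf_eq[of 1 1 1] Pinf_inf_iff Pinf_add_mult by (auto simp: fract_collapse)

lemma Pinf_fr_None: assumes "degree p > 0" shows "Pinf (fr p) = None"
proof (rule Pinf_None, rule notI)
  assume "\<exists>p' q. fr p = Fract p' q \<and> q \<noteq> 0 \<and> degree p' \<le> degree q"
  then obtain p' q where h: "fr p = Fract p' q" "q \<noteq> 0" "degree p' \<le> degree q" by blast
  have "p * q = p'" using h by (simp add: eq_fract)
  moreover have "p \<noteq> 0" using assms by auto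
  ultimately have "degree p + degree q = degree p'" using h by (metis degree_mult_eq)
  then show False using assms h by simp
qed

lemma Pinf_const: "Pinf (const_fract c) = Some c"
  unfolding const_fract_def using Pinf_eq[of "fr [:c:]" "[:c:]" 1] by simp

lemma Pinf_var: "Pinf var_y = None"
  unfolding var_y_def by (rule Pinf_fr_None) simp

lemma Pa_const: "Pa a (const_fract c) = Some c"
  unfolding const_fract_def Pa_fr by simp

lemma Pa_var: "Pa a var_y = Some a"
  unfolding var_y_def Pa_fr by simp

definition Pl :: "real option \<Rightarrow> real poly fract \<Rightarrow> real option" where
  "Pl w = (case w of None \<Rightarrow> Pinf | Some a \<Rightarrow> Pa a)"

lemma Pl_place: "real_place UNIV (Pl w)"
  by (cases w) (simp_all add: Pl_def Pa_place Pinf_place)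

lemma Pl_var: "Pl w var_y = w"
  by (cases w) (simp_all add: Pl_def Pa_var Pinf_var)

lemma Pl_const: "Pl w (const_fract c) = Some c"
  by (cases w) (simp_all add: Pl_def Pa_const Pinf_const)

lemma subf_UNIV: "subf (UNIV :: 'a::field set)" by (simp add: subf_def)

lemma place_Pl: "place UNIV (Pl w)"
  by (simp add: place_def subf_UNIV Pl_place)



lemma pCons_X: "pCons c p = [:c:] + [:0,1:] * (p :: real poly)"
  by (simp add: mult_pCons_left)

lemma Fract_power: "Fract a b ^ k = Fract (a ^ k) (b ^ k :: real poly)"
  by (induction k) (simp_all add: fract_collapse)

context
  fixes S :: "real set" and \<xi>
  assumes S: "real_subfield S" and P: "place (ratfun_field S) \<xi>"
    and cst: "\<forall>c\<in>S. \<xi> (const_fract c) = Some c"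
begin

interpretation place "ratfun_field S" \<xi> by (rule P)

lemma fr_inK: "FP S p \<Longrightarrow> fr p \<in> ratfun_field S" by (rule fr_in[OF _ S])

lemma poly_vals: assumes y: "\<xi> var_y = Some a"
  shows "FP S p \<Longrightarrow> \<xi> (fr p) = Some (poly p a)"
proof (induction p)
  case 0
  then show ?case using zero by (simp add: fr_0)
next
  case (pCons c p)
  have cp: "c \<in> S" "FP S p" using FP_pConsD[OF pCons.prems] by auto
  have pc: "pCons c p = [:c:] + [:0,1:] * p" by (rule pCons_X)
  have e: "fr (pCons c p) = const_fract c + var_y * fr p"
    unfolding const_fract_def var_y_def by (subst pc) simp
  have "\<xi> (var_y * fr p) = Some (a * poly p a)"
    using mult[OF var_in[OF S] fr_inK[OF cp(2)] y pCons.IH[OF cp(2)]] .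
  then have "\<xi> (const_fract c + var_y * fr p) = Some (c + a * poly p a)"
    using add[OF const_in[OF S cp(1)] _ cst[rule_format, OF cp(1)]] subfD[OF K] var_in[OF S] fr_inK[OF cp(2)] by auto
  then show ?case using e by simp
qed

lemma z_val: assumes y: "\<xi> var_y = None" shows "\<xi> (inverse var_y) = Some 0"
  using inverse_inf[OF var_in[OF S] y] .

lemma inf_vals1: assumes y: "\<xi> var_y = None"
  shows "FP S p \<Longrightarrow> degree p \<le> n \<Longrightarrow> \<xi> (Fract p ([:0,1:] ^ n)) = Some (coeff p n)"
proof (induction n arbitrary: p)
  case 0
  then obtain c where c: "p = [:c:]" by (metis degree_eq_zeroE le_zero_eq)
  have "c \<in> S" using 0 c by (metis FP_pConsD)
  then show ?case using cst c by (simp add: const_fract_def)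
next
  case (Suc n)
  obtain c p' where p: "p = pCons c p'" by (cases p) auto
  have cp: "c \<in> S" "FP S p'" using FP_pConsD Suc.prems p by auto
  have dp': "degree p' \<le> n" using Suc.prems(2) p by (cases "p' = 0") auto
  define X :: "real poly" where "X = [:0,1:]"
  have X0: "X \<noteq> 0" by (simp add: X_def)
  have pc: "p = [:c:] + X * p'" unfolding p X_def by (rule pCons_X)
  have XX: "X ^ Suc n * X ^ n \<noteq> 0" "X ^ Suc n \<noteq> 0" using X0 by auto
  have "const_fract c * inverse var_y ^ Suc n + Fract p' (X ^ n) = Fract ([:c:] * X ^ n + p' * X ^ Suc n) (X ^ Suc n * X ^ n)"
    unfolding const_fract_def var_y_def X_def[symmetric] inverse_fract Fract_power using XX X0 by simp
  also have "\<dots> = Fract p (X ^ Suc n)"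
    unfolding eq_fract(1)[OF XX] pc by (simp add: algebra_simps)
  finally have e: "Fract p (X ^ Suc n) = const_fract c * inverse var_y ^ Suc n + Fract p' (X ^ n)" by simp
  have zK: "inverse var_y \<in> ratfun_field S" using subfD[OF K] var_in[OF S] by auto
  have zp: "\<xi> (inverse var_y ^ Suc n) = Some 0" using power[OF zK z_val[OF y], of "Suc n"] by simp
  have zpK: "inverse var_y ^ Suc n \<in> ratfun_field S"
    using zK subfD[OF K] by (induction n) auto
  have t1: "\<xi> (const_fract c * inverse var_y ^ Suc n) = Some 0"
    using mult[OF const_in[OF S cp(1)] zpK cst[rule_format, OF cp(1)] zp] by simp
  have t2: "\<xi> (Fract p' (X ^ n)) = Some (coeff p' n)" using Suc.IH[OF cp(2) dp'] X_def by simp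
  have t2K: "Fract p' (X ^ n) \<in> ratfun_field S"
    using cp(2) X0 by (intro ratfun_field_memI FP_power FP_X S) (auto simp: X_def FP_X[OF S])
  have "\<xi> (Fract p (X ^ Suc n)) = Some (0 + coeff p' n)"
    unfolding e using add[OF _ t2K t1 t2] subfD[OF K] const_in[OF S cp(1)] zpK by auto
  then show ?case using p X_def by simp
qed

lemma inf_vals: assumes y: "\<xi> var_y = None" and pq: "FP S p" "FP S q" "q \<noteq> 0"
  shows "\<xi> (Fract p q) = (if degree p \<le> degree q then Some (coeff p (degree q) / lead_coeff q) else None)"
proof (cases "p = 0")
  case True
  then show ?thesis using zero pq by (simp add: fract_collapse)
next
  case False
  define X :: "real poly" where "X = [:0,1:]"
  have X0: "X \<noteq> 0" by (simp add: X_def)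
  define A where "A = Fract p (X ^ degree p)"
  define B where "B = Fract q (X ^ degree q)"
  have AK: "A \<in> ratfun_field S" unfolding A_def using pq X0 by (intro ratfun_field_memI FP_power FP_X S) (auto simp: X_def FP_X[OF S])
  have BK: "B \<in> ratfun_field S" unfolding B_def using pq X0 by (intro ratfun_field_memI FP_power FP_X S) (auto simp: X_def FP_X[OF S])
  have vA: "\<xi> A = Some (lead_coeff p)" unfolding A_def X_def using inf_vals1[OF y pq(1)] by simp
  have vB: "\<xi> B = Some (lead_coeff q)" unfolding B_def X_def using inf_vals1[OF y pq(2)] by simp
  have lp: "lead_coeff p \<noteq> 0" "lead_coeff q \<noteq> 0" using False pq by auto
  have zK: "inverse var_y \<in> ratfun_field S" using subfD[OF K] var_in[OF S] by auto
  have zpK: "inverse var_y ^ k \<in> ratfun_field S" for k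
    using zK subfD[OF K] by (induction k) auto
  have zp: "\<xi> (inverse var_y ^ k) = Some (0 ^ k)" for k using power[OF zK z_val[OF y]] .
  have iz: "inverse var_y ^ k = Fract 1 (X ^ k)" for k
    unfolding var_y_def X_def inverse_fract Fract_power by simp
  have iA: "\<xi> (inverse A) = Some (inverse (lead_coeff p))" using inverse_fin[OF AK vA lp(1)] .
  have iB: "\<xi> (inverse B) = Some (inverse (lead_coeff q))" using inverse_fin[OF BK vB lp(2)] .
  have bK: "Fract p q \<in> ratfun_field S" using pq by (rule ratfun_field_memI)
  show ?thesis
  proof (cases "degree p \<le> degree q")
    case True
    define k where "k = degree q - degree p"
    have dq: "X ^ degree q = X ^ degree p * X ^ k" unfolding k_def using True by (simp flip: power_add)
    have e: "Fract p q = A * inverse B * inverse var_y ^ k"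
      unfolding A_def B_def iz inverse_fract using X0 pq(3) by (simp add: eq_fract dq algebra_simps)
    have "\<xi> (Fract p q) = Some (lead_coeff p * inverse (lead_coeff q) * 0 ^ k)"
      unfolding e using mult[OF _ zpK _ zp] mult[OF AK _ vA iB] subfD[OF K] AK BK by auto
    moreover have "lead_coeff p * inverse (lead_coeff q) * 0 ^ k = coeff p (degree q) / lead_coeff q"
    proof (cases "k = 0")
      case True
      then have "degree p = degree q" using \<open>degree p \<le> degree q\<close> k_def by simp
      then show ?thesis using True by (simp add: field_simps)
    next
      case False
      then have "degree p < degree q" using k_def by simp
      then show ?thesis using False by (simp add: coeff_eq_0)
    qed
    ultimately show ?thesis using True by simp
  next
    case False
    define k where "k = degree p - degree q"
    have k0: "k > 0" using False k_def by simp
    have dp: "X ^ degree p = X ^ degree q * X ^ k" unfolding k_def using False by (simp flip: power_add)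
    have e: "inverse (Fract p q) = B * inverse A * inverse var_y ^ k"
      unfolding A_def B_def iz inverse_fract using X0 pq(3) False \<open>p \<noteq> 0\<close> by (simp add: eq_fract dp algebra_simps)
    have "\<xi> (inverse (Fract p q)) = Some (lead_coeff q * inverse (lead_coeff p) * 0 ^ k)"
      unfolding e using mult[OF _ zpK _ zp] mult[OF BK _ vB iA] subfD[OF K] AK BK by auto
    then have "\<xi> (inverse (Fract p q)) = Some 0" using k0 by simp
    moreover have "Fract p q \<noteq> 0" using \<open>p \<noteq> 0\<close> pq(3) by (simp add: Fract_eq_0)
    ultimately show ?thesis using inf_iff[OF bK] False by simp
  qed
qed

end

lemma place_eq_poly:
  assumes S: "real_subfield S" and P1: "place (ratfun_field S) \<xi>1" and P2: "place (ratfun_field S) \<xi>2"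
    and agree: "\<And>p. FP S p \<Longrightarrow> \<xi>1 (fr p) = \<xi>2 (fr p) \<and> \<xi>1 (fr p) \<noteq> None"
  shows "\<xi>1 = \<xi>2"
proof
  fix b
  interpret p1: place "ratfun_field S" \<xi>1 by (rule P1)
  interpret p2: place "ratfun_field S" \<xi>2 by (rule P2)
  show "\<xi>1 b = \<xi>2 b"
  proof (cases "b \<in> ratfun_field S")
    case False
    then show ?thesis using p1.outside p2.outside by simp
  next
    case True
    then obtain p q where pq: "FP S p" "FP S q" "q \<noteq> 0" "b = Fract p q" by (rule ratfun_field_memE)
    obtain s t f g where st: "FP S s" "FP S t" "t \<noteq> 0" "FP S f" "FP S g" "Fract p q = Fract s t" "f * s + g * t = 1"
      using FP_bezout_rep[OF S pq(1-3)] by blast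
    have K: "fr x \<in> ratfun_field S" if "FP S x" for x using fr_in[OF that S] .
    obtain u where u: "\<xi>1 (fr s) = Some u" "\<xi>2 (fr s) = Some u" using agree[OF st(1)] by (metis not_None_eq)
    obtain w where w: "\<xi>1 (fr t) = Some w" "\<xi>2 (fr t) = Some w" using agree[OF st(2)] by (metis not_None_eq)
    obtain f' where f': "\<xi>1 (fr f) = Some f'" using agree[OF st(4)] by (metis not_None_eq)
    obtain g' where g': "\<xi>1 (fr g) = Some g'" using agree[OF st(5)] by (metis not_None_eq)
    have b: "b = fr s * inverse (fr t)" using pq st by simp
    have tK: "inverse (fr t) \<in> ratfun_field S" by (rule subfD(6)[OF p1.K K[OF st(2)]])
    show ?thesis
    proof (cases "w = 0")
      case False
      have "\<xi>1 b = Some (u * inverse w)"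
        unfolding b using p1.mult[OF K[OF st(1)] tK u(1) p1.inverse_fin[OF K[OF st(2)] w(1) False]] .
      moreover have "\<xi>2 b = Some (u * inverse w)"
        unfolding b using p2.mult[OF K[OF st(1)] tK u(2) p2.inverse_fin[OF K[OF st(2)] w(2) False]] .
      ultimately show ?thesis by simp
    next
      case True
      have fs: "fr f * fr s \<in> ratfun_field S" by (rule subfD(4)[OF p1.K K[OF st(4)] K[OF st(1)]])
      have gt: "fr g * fr t \<in> ratfun_field S" by (rule subfD(4)[OF p1.K K[OF st(5)] K[OF st(2)]])
      have "\<xi>1 (fr f * fr s + fr g * fr t) = Some (f' * u + g' * w)"
        by (rule p1.add[OF fs gt p1.mult[OF K[OF st(4)] K[OF st(1)] f' u(1)] p1.mult[OF K[OF st(5)] K[OF st(2)] g' w(1)]])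
      moreover have "fr f * fr s + fr g * fr t = 1" using st(7) by (metis fr_add fr_mult fr_1)
      ultimately have "f' * u + g' * w = 1" using p1.one by simp
      then have u0: "u \<noteq> 0" using True by auto
      have s0: "fr s \<noteq> 0" using u0 u(1) p1.zero by auto
      have t0: "fr t \<noteq> 0" using st(3) by (simp add: fr_eq_0)
      have ib: "inverse b = fr t * inverse (fr s)" unfolding b by simp
      have sK: "inverse (fr s) \<in> ratfun_field S" by (rule subfD(6)[OF p1.K K[OF st(1)]])
      have b0: "b \<noteq> 0" unfolding b using s0 t0 by (metis divide_eq_0_iff divide_inverse)
      have "\<xi>1 (inverse b) = Some 0"
        unfolding ib using p1.mult[OF K[OF st(2)] sK w(1) p1.inverse_fin[OF K[OF st(1)] u(1) u0]] True by simp
      then have "\<xi>1 b = None" using p1.inf_iff[OF \<open>b \<in> ratfun_field S\<close>] b0 by simp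
      moreover have "\<xi>2 (inverse b) = Some 0"
        unfolding ib using p2.mult[OF K[OF st(2)] sK w(2) p2.inverse_fin[OF K[OF st(1)] u(2) u0]] True by simp
      then have "\<xi>2 b = None" using p2.inf_iff[OF \<open>b \<in> ratfun_field S\<close>] b0 by simp
      ultimately show ?thesis by simp
    qed
  qed
qed

lemma uniq:
  assumes S: "real_subfield S" and P1: "place (ratfun_field S) \<xi>1" and P2: "place (ratfun_field S) \<xi>2"
    and c1: "\<forall>c\<in>S. \<xi>1 (const_fract c) = Some c" and c2: "\<forall>c\<in>S. \<xi>2 (const_fract c) = Some c"
    and y: "\<xi>1 var_y = \<xi>2 var_y"
  shows "\<xi>1 = \<xi>2"
proof (cases "\<xi>1 var_y")
  case (Some a)
  show ?thesis
  proof (rule place_eq_poly[OF S P1 P2])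
    fix p assume "FP S p"
    then show "\<xi>1 (fr p) = \<xi>2 (fr p) \<and> \<xi>1 (fr p) \<noteq> None"
      using poly_vals[OF S P1 c1 Some] poly_vals[OF S P2 c2] Some y by simp
  qed
next
  case None
  show ?thesis
  proof
    fix b
    interpret p1: place "ratfun_field S" \<xi>1 by (rule P1)
    interpret p2: place "ratfun_field S" \<xi>2 by (rule P2)
    show "\<xi>1 b = \<xi>2 b"
    proof (cases "b \<in> ratfun_field S")
      case False
      then show ?thesis using p1.outside p2.outside by simp
    next
      case True
      then obtain p q where pq: "FP S p" "FP S q" "q \<noteq> 0" "b = Fract p q" by (rule ratfun_field_memE)
      show ?thesis using inf_vals[OF S P1 c1 None pq(1-3)] inf_vals[OF S P2 c2 _ pq(1-3)] None y pq(4) by simp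
    qed
  qed
qed



context
  fixes S :: "real set" and \<zeta>
  assumes RC: "real_closed_subfield S" and P: "place (ratfun_field S) \<zeta>"
begin

interpretation place "ratfun_field S" \<zeta> by (rule P)

lemma S: "real_subfield S" using RC unfolding real_closed_subfield_def by simp
lemma sq: "c \<in> S \<Longrightarrow> c > 0 \<Longrightarrow> \<exists>b\<in>S. b * b = c" using RC unfolding real_closed_subfield_def by simp

lemma cK: "c \<in> S \<Longrightarrow> const_fract c \<in> ratfun_field S" by (rule const_in[OF S])

lemma g_add: "c \<in> S \<Longrightarrow> d \<in> S \<Longrightarrow> \<zeta> (const_fract c) = Some u \<Longrightarrow> \<zeta> (const_fract d) = Some v
   \<Longrightarrow> \<zeta> (const_fract (c + d)) = Some (u + v)"
  unfolding const_add by (rule add[OF cK cK])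

lemma g_mult: "c \<in> S \<Longrightarrow> d \<in> S \<Longrightarrow> \<zeta> (const_fract c) = Some u \<Longrightarrow> \<zeta> (const_fract d) = Some v
   \<Longrightarrow> \<zeta> (const_fract (c * d)) = Some (u * v)"
  unfolding const_mult by (rule mult[OF cK cK])

lemma g_uminus: "c \<in> S \<Longrightarrow> \<zeta> (const_fract c) = Some u \<Longrightarrow> \<zeta> (const_fract (- c)) = Some (- u)"
  unfolding const_uminus by (rule uminus[OF cK])

lemma g_inv: "c \<in> S \<Longrightarrow> \<zeta> (const_fract c) = Some u \<Longrightarrow> u \<noteq> 0 \<Longrightarrow> \<zeta> (const_fract (inverse c)) = Some (inverse u)"
  unfolding const_inverse by (rule inverse_fin[OF cK])

lemma g_nat: "\<zeta> (const_fract (real n)) = Some (real n)"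
  unfolding const_nat
proof (induction n)
  case 0 then show ?case using zero by simp
next
  case (Suc n)
  have "of_nat n \<in> ratfun_field S"
    using const_in[OF S rsf_nat[OF S, of n]] const_nat by metis
  then show ?case using add[OF _ _ Suc.IH one] subfD[OF K] by (simp add: add.commute)
qed

lemma g_int: "\<zeta> (const_fract (real_of_int i)) = Some (real_of_int i)"
proof (cases "i \<ge> 0")
  case True
  then show ?thesis using g_nat[of "nat i"] by simp
next
  case False
  have "\<zeta> (const_fract (- real (nat (- i)))) = Some (- real (nat (- i)))"
    by (rule g_uminus[OF rsf_nat[OF S] g_nat])
  then show ?thesis using False by simp
qed

lemma g_pos: assumes c: "c \<in> S" "c > 0" and v: "\<zeta> (const_fract c) = Some v" shows "v \<ge> 0"
proof -
  obtain b where b: "b \<in> S" "b * b = c" using sq[OF c] by blast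
  show ?thesis
  proof (cases "\<zeta> (const_fract b)")
    case (Some w)
    then have "\<zeta> (const_fract c) = Some (w * w)" using g_mult[OF b(1) b(1) Some Some] b by simp
    then show ?thesis using v by simp
  next
    case None
    have ib: "\<zeta> (inverse (const_fract b)) = Some 0" by (rule inverse_inf[OF cK[OF b(1)] None])
    have ibK: "inverse (const_fract b) \<in> ratfun_field S" using subfD(6)[OF K cK[OF b(1)]] .
    have "inverse (const_fract c) = inverse (const_fract b) * inverse (const_fract b)"
      using b(2) const_mult[of b b] by simp
    then have "\<zeta> (inverse (const_fract c)) = Some 0" using mult[OF ibK ibK ib ib] by simp
    moreover have "const_fract c \<noteq> 0" using c by (simp add: const_eq_0)
    ultimately have "\<zeta> (const_fract c) = None" using inf_iff[OF cK[OF c(1)]] by simp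
    then show ?thesis using v by simp
  qed
qed

lemma g_fin: assumes c: "c \<in> S" shows "\<zeta> (const_fract c) \<noteq> None"
proof
  assume N: "\<zeta> (const_fract c) = None"
  have c0: "c \<noteq> 0" using N zero const_0 by auto
  have d: "\<zeta> (const_fract (inverse c)) = Some 0"
    using inverse_inf[OF cK[OF c] N] const_inverse by simp
  define d where "d = inverse c"
  have dS: "d \<in> S" using rsf_inverse[OF S c] d_def by simp
  have d0: "d \<noteq> 0" using c0 d_def by simp
  obtain e where e: "e \<in> S" "e > 0" "\<zeta> (const_fract e) = Some 0"
  proof (cases "d > 0")
    case True then show ?thesis using that dS d d_def by blast
  next
    case False
    then have "- d > 0" using d0 by simp
    moreover have "\<zeta> (const_fract (- d)) = Some 0" using g_uminus[OF dS] d d_def by fastforce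
    ultimately show ?thesis using that rsf_uminus[OF S dS] by blast
  qed
  obtain n where n: "n > 0" "inverse (real n) < e" using ex_inverse_of_nat_less[OF e(2)] by blast
  have nS: "real n \<in> S" by (rule rsf_nat[OF S])
  have inS: "inverse (real n) \<in> S" by (rule rsf_inverse[OF S nS])
  have gi: "\<zeta> (const_fract (inverse (real n))) = Some (inverse (real n))"
    using g_inv[OF nS g_nat] n by simp
  have "\<zeta> (const_fract (e + - inverse (real n))) = Some (0 + - inverse (real n))"
    by (rule g_add[OF e(1) rsf_uminus[OF S inS] e(3) g_uminus[OF inS gi]])
  moreover have "e + - inverse (real n) \<in> S" by (rule rsf_add[OF S e(1) rsf_uminus[OF S inS]])
  moreover have "e + - inverse (real n) > 0" using n by simp
  ultimately have "0 + - inverse (real n) \<ge> 0" using g_pos by blast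
  then show False using n by simp
qed

lemma g_rat: assumes r: "r \<in> \<rat>" shows "\<zeta> (const_fract r) = Some r"
proof -
  obtain a b where ab: "b > 0" "r = of_int a / of_int b" using Rats_cases'[OF r] by metis
  have aS: "real_of_int a \<in> S" "real_of_int b \<in> S" by (rule rsf_int[OF S])+
  have "\<zeta> (const_fract (inverse (real_of_int b))) = Some (inverse (real_of_int b))"
    using g_inv[OF aS(2) g_int] ab by simp
  from g_mult[OF aS(1) rsf_inverse[OF S aS(2)] g_int this]
  show ?thesis using ab by (simp add: divide_inverse)
qed

lemma g_id: assumes c: "c \<in> S" shows "\<zeta> (const_fract c) = Some c"
proof -
  obtain v where v: "\<zeta> (const_fract c) = Some v" using g_fin[OF c] by auto
  have False if "v \<noteq> c"
  proof (cases "c < v")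
    case True
    obtain r where r: "r \<in> \<rat>" "c < r" "r < v" using Rats_dense_in_real[OF True] by blast
    have rS: "r \<in> S" by (rule rsf_rat[OF S r(1)])
    have h1: "\<zeta> (const_fract (r + - c)) = Some (r + - v)"
      by (rule g_add[OF rS rsf_uminus[OF S c] g_rat[OF r(1)] g_uminus[OF c v]])
    have h2: "r + - c \<in> S" by (rule rsf_add[OF S rS rsf_uminus[OF S c]])
    have h3: "r + - c > 0" using r by simp
    have "r + - v \<ge> 0" by (rule g_pos[OF h2 h3 h1])
    then show False using r by simp
  next
    case False
    then have lt: "v < c" using that by simp
    obtain r where r: "r \<in> \<rat>" "v < r" "r < c" using Rats_dense_in_real[OF lt] by blast
    have rS: "r \<in> S" by (rule rsf_rat[OF S r(1)])
    have h1: "\<zeta> (const_fract (c + - r)) = Some (v + - r)"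
      by (rule g_add[OF c rsf_uminus[OF S rS] v g_uminus[OF rS g_rat[OF r(1)]]])
    have h2: "c + - r \<in> S" by (rule rsf_add[OF S c rsf_uminus[OF S rS]])
    have h3: "c + - r > 0" using r by simp
    have "v + - r \<ge> 0" by (rule g_pos[OF h2 h3 h1])
    then show False using r by simp
  qed
  then show ?thesis using v by auto
qed

end

lemma place_id_const:
  assumes "real_closed_subfield S" "\<zeta> \<in> places (ratfun_field S)"
  shows "\<forall>c\<in>S. \<zeta> (const_fract c) = Some c"
proof -
  have S: "real_subfield S" using assms(1) unfolding real_closed_subfield_def by simp
  have P: "place (ratfun_field S) \<zeta>" using place_places[OF subf_ratfun[OF S] assms(2)] .
  show ?thesis using g_id[OF assms(1) P] by blast
qed



lemma local_pos:
  fixes f :: "real \<Rightarrow> real"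
  assumes "isCont f a" "f a > 0"
  shows "\<exists>d>0. \<forall>t. \<bar>t - a\<bar> < d \<longrightarrow> f t > 0"
proof -
  have "\<forall>\<^sub>F t in at a. 0 < f t"
    using order_tendstoD(1)[OF assms(1)[unfolded isCont_def] assms(2)] .
  then obtain d where d: "d > 0" "\<forall>t. t \<noteq> a \<and> dist t a < d \<longrightarrow> 0 < f t"
    unfolding eventually_at by auto
  show ?thesis using d assms(2) by (intro exI[of _ d]) (auto simp: dist_real_def)
qed

lemma poly_sum_upto: fixes p :: "real poly" assumes "degree p \<le> d" shows "poly p t = (\<Sum>i\<le>d. coeff p i * t ^ i)"
proof -
  have "poly p t = (\<Sum>i\<le>degree p. coeff p i * t ^ i)" by (rule poly_altdef)
  also have "\<dots> = (\<Sum>i\<le>d. coeff p i * t ^ i)"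
    by (rule sum.mono_neutral_left) (use assms in \<open>auto simp: coeff_eq_0\<close>)
  finally show ?thesis .
qed

definition hrev :: "real poly \<Rightarrow> nat \<Rightarrow> real \<Rightarrow> real" where
  "hrev p d s = (\<Sum>i\<le>d. coeff p i * s ^ (d - i))"

lemma hrev_eq: assumes "degree p \<le> d" "t \<noteq> 0" shows "poly p t = t ^ d * hrev p d (inverse t)"
proof -
  have "t ^ d * hrev p d (inverse t) = (\<Sum>i\<le>d. coeff p i * (t ^ d * inverse t ^ (d - i)))"
    unfolding hrev_def sum_distrib_left by (simp add: algebra_simps)
  also have "\<dots> = (\<Sum>i\<le>d. coeff p i * t ^ i)"
  proof (rule sum.cong)
    fix i assume "i \<in> {..d}"
    then have "t ^ d = t ^ i * t ^ (d - i)" by (simp flip: power_add)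
    then show "coeff p i * (t ^ d * inverse t ^ (d - i)) = coeff p i * t ^ i"
      using assms(2) by (simp add: power_inverse field_simps)
  qed simp
  finally show ?thesis using poly_sum_upto[OF assms(1)] by simp
qed

lemma hrev_0: "hrev p d 0 = coeff p d"
proof -
  have "hrev p d 0 = (\<Sum>i\<in>{d}. coeff p i * 0 ^ (d - i))"
    unfolding hrev_def by (rule sum.mono_neutral_right) auto
  then show ?thesis by simp
qed

lemma hrev_cont: "isCont (hrev p d) s"
  unfolding hrev_def by (intro continuous_intros)

lemma asym: fixes p q :: "real poly"
  assumes q: "q \<noteq> 0" and dg: "degree p \<le> degree q" and pos: "coeff p (degree q) * lead_coeff q > 0"
  shows "\<exists>M>0. \<forall>t. \<bar>t\<bar> > M \<longrightarrow> poly p t * poly q t > 0"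
proof -
  define d where "d = degree q"
  define h where "h = (\<lambda>s. hrev p d s * hrev q d s)"
  have "isCont h 0" unfolding h_def by (intro continuous_intros hrev_cont)
  moreover have "h 0 > 0" unfolding h_def hrev_0 d_def using pos by simp
  ultimately obtain e where e: "e > 0" "\<forall>s. \<bar>s - 0\<bar> < e \<longrightarrow> h s > 0" using local_pos by blast
  show ?thesis
  proof (intro exI[of _ "inverse e"] conjI allI impI)
    show "inverse e > 0" using e by simp
    fix t :: real assume t: "\<bar>t\<bar> > inverse e"
    then have t0: "t \<noteq> 0" using e by auto
    have "\<bar>inverse t\<bar> < e"
      using t e t0 by (metis abs_inverse abs_le_zero_iff inverse_less_imp_less inverse_inverse_eq linorder_not_less)
    then have hs: "h (inverse t) > 0" using e by simp
    have "poly p t * poly q t = (t ^ d) ^ 2 * h (inverse t)"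
      unfolding h_def hrev_eq[OF dg[folded d_def] t0] hrev_eq[of q d t] using t0 d_def
      by (simp add: hrev_eq[of q d t] power2_eq_square)
    moreover have "(t ^ d) ^ 2 > 0" using t0 by simp
    ultimately show "poly p t * poly q t > 0" using hs by simp
  qed
qed



definition pos :: "real option \<Rightarrow> bool" where "pos x \<longleftrightarrow> x \<noteq> None \<and> the x > 0"

lemma pos_Some: "pos (Some v) \<longleftrightarrow> v > 0" by (simp add: pos_def)
lemma pos_None: "\<not> pos None" by (simp add: pos_def)

lemma nbhd_fin:
  assumes R: "real_subfield R" and b: "pos (Pa a0 b)"
  shows "\<exists>c\<in>ratfun_field R. pos (Pa a0 c) \<and> (\<forall>w. pos (Pl w c) \<longrightarrow> pos (Pl w b))"
proof -
  have "Pa a0 b \<noteq> None" using b by (simp add: pos_def)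
  then obtain p q where pq: "b = Fract p q" "poly q a0 \<noteq> 0" using Pa_fin by blast
  define f where "f = (\<lambda>t. poly p t * poly q t)"
  have "Pa a0 b = Some (poly p a0 / poly q a0)" by (rule Pa_eq[OF pq])
  then have "poly p a0 / poly q a0 > 0" using b by (simp add: pos_def)
  then have "f a0 > 0" unfolding f_def by (simp add: zero_less_divide_iff zero_less_mult_iff)
  moreover have "isCont f a0" unfolding f_def by (intro continuous_intros)
  ultimately obtain d where d: "d > 0" "\<forall>t. \<bar>t - a0\<bar> < d \<longrightarrow> f t > 0" using local_pos by blast
  obtain r1 where r1: "r1 \<in> \<rat>" "a0 - d < r1" "r1 < a0" using Rats_dense_in_real[of "a0 - d" a0] d by auto
  obtain r2 where r2: "r2 \<in> \<rat>" "a0 < r2" "r2 < a0 + d" using Rats_dense_in_real[of a0 "a0 + d"] d by auto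
  define P where "P = [:-r1, 1:] * [:r2, -1:]"
  have r1R: "r1 \<in> R" by (rule rsf_rat[OF R r1(1)])
  have r2R: "r2 \<in> R" by (rule rsf_rat[OF R r2(1)])
  have PR: "FP R P" unfolding P_def
    by (rule FP_mult[OF R FP_pCons[OF R rsf_uminus[OF R r1R] FP_const[OF R rsf1[OF R]]]
                         FP_pCons[OF R r2R FP_const[OF R rsf_uminus[OF R rsf1[OF R]]]]])
  have polyP: "poly P t = (t - r1) * (r2 - t)" for t unfolding P_def by (simp add: algebra_simps)
  have degP: "degree P = 2" unfolding P_def by (subst degree_mult_eq) auto
  define c where "c = fr P"
  have cR: "c \<in> ratfun_field R" unfolding c_def by (rule fr_in[OF PR R])
  have Pac: "Pa t c = Some ((t - r1) * (r2 - t))" for t unfolding c_def Pa_fr polyP ..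
  have Pinfc: "Pinf c = None" unfolding c_def by (rule Pinf_fr_None) (simp add: degP)
  show ?thesis
  proof (intro bexI conjI allI impI)
    show "pos (Pa a0 c)" unfolding Pac pos_Some using r1 r2 by (simp add: mult_pos_pos)
    fix w assume pw: "pos (Pl w c)"
    then obtain t where w: "w = Some t" using Pinfc pos_None by (cases w) (auto simp: Pl_def)
    have "(t - r1) * (r2 - t) > 0" using pw w Pac by (simp add: Pl_def pos_Some)
    then have "r1 < t \<and> t < r2" using r1 r2 by (smt (verit) mult_nonneg_nonpos mult_nonpos_nonneg)
    then have "\<bar>t - a0\<bar> < d" using r1 r2 by auto
    then have ft: "f t > 0" using d by blast
    then have qt: "poly q t \<noteq> 0" unfolding f_def by auto
    have "Pa t b = Some (poly p t / poly q t)" by (rule Pa_eq[OF pq(1) qt])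
    moreover have "poly p t / poly q t > 0" using ft unfolding f_def by (simp add: zero_less_divide_iff zero_less_mult_iff)
    ultimately show "pos (Pl w b)" using w by (simp add: Pl_def pos_Some)
  qed (rule cR)
qed

lemma nbhd_inf:
  assumes R: "real_subfield R" and b: "pos (Pinf b)"
  shows "\<exists>c\<in>ratfun_field R. pos (Pinf c) \<and> (\<forall>w. pos (Pl w c) \<longrightarrow> pos (Pl w b))"
proof -
  have "Pinf b \<noteq> None" using b by (simp add: pos_def)
  then obtain p q where pq: "b = Fract p q" "q \<noteq> 0" "degree p \<le> degree q" using Pinf_fin by blast
  have "Pinf b = Some (coeff p (degree q) / lead_coeff q)" by (rule Pinf_eq[OF pq])
  then have "coeff p (degree q) / lead_coeff q > 0" using b by (simp add: pos_def)
  then have "coeff p (degree q) * lead_coeff q > 0" by (simp add: zero_less_divide_iff zero_less_mult_iff)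
  from asym[OF pq(2,3) this] obtain M where M: "M > 0" "\<forall>t. \<bar>t\<bar> > M \<longrightarrow> poly p t * poly q t > 0" by blast
  obtain N where N: "M < real N" using reals_Archimedean2 by blast
  define P where "P = [:- (real N * real N), 0, 1:]"
  define Q :: "real poly" where "Q = [:1, 0, 1:]"
  have PR: "FP R P" unfolding P_def
    by (rule FP_pCons[OF R rsf_uminus[OF R rsf_mult[OF R rsf_nat[OF R] rsf_nat[OF R]]]
          FP_pCons[OF R rsf0[OF R] FP_const[OF R rsf1[OF R]]]])
  have QR: "FP R Q" unfolding Q_def
    by (rule FP_pCons[OF R rsf1[OF R] FP_pCons[OF R rsf0[OF R] FP_const[OF R rsf1[OF R]]]])
  have Q0: "Q \<noteq> 0" unfolding Q_def by simp
  have polyP: "poly P t = t * t - real N * real N" for t unfolding P_def by (simp add: algebra_simps)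
  have polyQ: "poly Q t = 1 + t * t" for t unfolding Q_def by (simp add: algebra_simps)
  have Qt: "poly Q t \<noteq> 0" for t unfolding polyQ by (smt (verit) zero_le_square)
  define c where "c = Fract P Q"
  have cR: "c \<in> ratfun_field R" unfolding c_def by (rule ratfun_field_memI[OF PR QR Q0])
  have Pac: "Pa t c = Some ((t * t - real N * real N) / (1 + t * t))" for t
    unfolding c_def using Pa_eq[OF refl Qt[of t], of P] polyP polyQ by simp
  have dQ: "degree Q = 2" "degree P = 2" unfolding Q_def P_def by simp_all
  have Pinfc: "Pinf c = Some 1" unfolding c_def using Pinf_eq[OF refl Q0, of P] dQ
    unfolding P_def Q_def by simp
  show ?thesis
  proof (intro bexI conjI allI impI)
    show "pos (Pinf c)" unfolding Pinfc pos_Some by simp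
    fix w assume pw: "pos (Pl w c)"
    show "pos (Pl w b)"
    proof (cases w)
      case None
      then show ?thesis using b by (simp add: Pl_def)
    next
      case (Some t)
      have "(t * t - real N * real N) / (1 + t * t) > 0" using pw Some Pac by (simp add: Pl_def pos_Some)
      moreover have "1 + t * t > 0" by (smt (verit) zero_le_square)
      ultimately have "t * t > real N * real N" by (simp add: zero_less_divide_iff)
      then have "\<bar>t\<bar> > real N" by (metis abs_ge_zero abs_mult_self_eq mult_mono linorder_not_less of_nat_0_le_iff)
      then have ft: "poly p t * poly q t > 0" using M N by auto
      then have qt: "poly q t \<noteq> 0" by auto
      have "Pa t b = Some (poly p t / poly q t)" by (rule Pa_eq[OF pq(1) qt])
      moreover have "poly p t / poly q t > 0" using ft by (simp add: zero_less_divide_iff zero_less_mult_iff)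
      ultimately show ?thesis using Some by (simp add: Pl_def pos_Some)
    qed
  qed (rule cR)
qed

lemma nbhd:
  assumes R: "real_subfield R" and b: "pos (Pl w0 b)"
  shows "\<exists>c\<in>ratfun_field R. pos (Pl w0 c) \<and> (\<forall>w. pos (Pl w c) \<longrightarrow> pos (Pl w b))"
proof (cases w0)
  case None
  then show ?thesis using nbhd_inf[OF R] b by (simp add: Pl_def)
next
  case (Some a)
  then show ?thesis using nbhd_fin[OF R] b by (simp add: Pl_def)
qed



lemma Hsub_places: "Hsub K b \<subseteq> places K" unfolding Hsub_def by auto

lemma topspace_places: "topspace (places_top K) = places K"
  unfolding places_top_def topology_generated_by_topspace using Hsub_places by blast

lemma Hsub_pos: "Hsub K b = {\<zeta> \<in> places K. pos (\<zeta> b)}"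
  unfolding Hsub_def pos_def by auto

lemma restr_in: "b \<in> L \<Longrightarrow> restr L z b = z b" unfolding restr_def by simp

lemma restr_Pl_places: "real_subfield S \<Longrightarrow> restr (ratfun_field S) (Pl w) \<in> places (ratfun_field S)"
  unfolding places_def using restr_place[OF place_Pl subf_ratfun] by blast

lemma is_const_ext_Pl:
  assumes F: "real_subfield F"
  shows "is_const_ext F \<zeta> (restr (ratfun_field F) (Pl (\<zeta> var_y)))"
  unfolding is_const_ext_def
  using restr_Pl_places[OF F] restr_in[OF const_in[OF F]] restr_in[OF var_in[OF F]] Pl_const Pl_var
  by simp

lemma is_const_ext_uniq:
  assumes F: "real_subfield F" and "is_const_ext F \<zeta> \<xi>1" "is_const_ext F \<zeta> \<xi>2"
  shows "\<xi>1 = \<xi>2"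
  using assms(2,3) unfolding is_const_ext_def
  by (intro uniq[OF F] place_places[OF subf_ratfun[OF F]]) auto

lemma ex1_ext: "real_subfield F \<Longrightarrow> \<exists>!\<xi>. is_const_ext F \<zeta> \<xi>"
  using is_const_ext_Pl is_const_ext_uniq by blast

lemma const_ext_eq: assumes F: "real_subfield F" shows "const_ext F \<zeta> = restr (ratfun_field F) (Pl (\<zeta> var_y))"
  unfolding const_ext_def proof (rule the_equality)
  show "is_const_ext F \<zeta> (restr (ratfun_field F) (Pl (\<zeta> var_y)))" by (rule is_const_ext_Pl[OF F])
  fix x assume "is_const_ext F \<zeta> x"
  then show "x = restr (ratfun_field F) (Pl (\<zeta> var_y))" using is_const_ext_uniq[OF F _ is_const_ext_Pl[OF F]] by blast
qed

lemma zeta_eq: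
  assumes RC: "real_closed_subfield R" and z: "\<zeta> \<in> places (ratfun_field R)"
  shows "\<zeta> = restr (ratfun_field R) (Pl (\<zeta> var_y))"
proof -
  have R: "real_subfield R" using RC unfolding real_closed_subfield_def by simp
  have P: "place (ratfun_field R) \<zeta>" by (rule place_places[OF subf_ratfun[OF R] z])
  have P2: "place (ratfun_field R) (restr (ratfun_field R) (Pl (\<zeta> var_y)))"
    by (rule place_places[OF subf_ratfun[OF R] restr_Pl_places[OF R]])
  show ?thesis
    by (rule uniq[OF R P P2 place_id_const[OF RC z]])
       (simp_all add: restr_in[OF const_in[OF R]] restr_in[OF var_in[OF R]] Pl_const Pl_var)
qed

theorem lemma6p1:
  fixes R F :: "real set"
  assumes "real_closed_subfield R"
    and "real_subfield F"
    and "R \<subseteq> F"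
  shows "(\<forall>\<zeta>\<in>places (ratfun_field R). \<exists>!\<xi>. is_const_ext F \<zeta> \<xi>)
    \<and> continuous_map (places_top (ratfun_field R)) (places_top (ratfun_field F)) (const_ext F)
    \<and> inj_on (const_ext F) (places (ratfun_field R))
    \<and> (\<forall>\<zeta>\<in>places (ratfun_field R). \<forall>a\<in>ratfun_field R. const_ext F \<zeta> a = \<zeta> a)
    \<and> (real_closed_subfield F \<longrightarrow>
        homeomorphic_map (places_top (ratfun_field R)) (places_top (ratfun_field F)) (const_ext F))"
proof -
  note RC = assms(1) and F = assms(2)
  have R: "real_subfield R" using RC unfolding real_closed_subfield_def by simp
  have RF: "ratfun_field R \<subseteq> ratfun_field F" by (rule ratfun_mono[OF assms(3)])
  have ce: "const_ext F \<zeta> = restr (ratfun_field F) (Pl (\<zeta> var_y))" for \<zeta> by (rule const_ext_eq[OF F])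
  have ce_places: "const_ext F \<zeta> \<in> places (ratfun_field F)" for \<zeta> unfolding ce by (rule restr_Pl_places[OF F])
  have P4: "\<forall>\<zeta>\<in>places (ratfun_field R). \<forall>a\<in>ratfun_field R. const_ext F \<zeta> a = \<zeta> a"
  proof (intro ballI)
    fix \<zeta> a assume z: "\<zeta> \<in> places (ratfun_field R)" and a: "a \<in> ratfun_field R"
    have "const_ext F \<zeta> a = Pl (\<zeta> var_y) a" unfolding ce using a RF by (simp add: restr_def subsetD)
    also have "\<dots> = \<zeta> a" using zeta_eq[OF RC z] a by (metis restr_in)
    finally show "const_ext F \<zeta> a = \<zeta> a" .
  qed
  have P1: "\<forall>\<zeta>\<in>places (ratfun_field R). \<exists>!\<xi>. is_const_ext F \<zeta> \<xi>" using ex1_ext[OF F] by blast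
  have P3: "inj_on (const_ext F) (places (ratfun_field R))"
  proof (rule inj_onI)
    fix z1 z2 assume z: "z1 \<in> places (ratfun_field R)" "z2 \<in> places (ratfun_field R)"
      and e: "const_ext F z1 = const_ext F z2"
    have "z1 var_y = z2 var_y" using P4 z e var_in[OF R] by metis
    then show "z1 = z2" using zeta_eq[OF RC z(1)] zeta_eq[OF RC z(2)] by metis
  qed
  have P2: "continuous_map (places_top (ratfun_field R)) (places_top (ratfun_field F)) (const_ext F)"
    unfolding places_top_def[of "ratfun_field F"]
  proof (rule continuous_on_generated_topo)
    show "const_ext F ` topspace (places_top (ratfun_field R)) \<subseteq> \<Union> (insert (places (ratfun_field F)) {Hsub (ratfun_field F) b |b. b \<in> ratfun_field F})"
      using ce_places by blast
    fix U assume U: "U \<in> insert (places (ratfun_field F)) {Hsub (ratfun_field F) b |b. b \<in> ratfun_field F}"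
    show "openin (places_top (ratfun_field R)) (const_ext F -` U \<inter> topspace (places_top (ratfun_field R)))"
    proof (cases "U = places (ratfun_field F)")
      case True
      then have "const_ext F -` U \<inter> topspace (places_top (ratfun_field R)) = topspace (places_top (ratfun_field R))"
        using ce_places by blast
      then show ?thesis by simp
    next
      case False
      then obtain b where b: "b \<in> ratfun_field F" "U = Hsub (ratfun_field F) b" using U by blast
      have eqs: "const_ext F -` U \<inter> topspace (places_top (ratfun_field R)) =
          {\<zeta> \<in> places (ratfun_field R). pos (Pl (\<zeta> var_y) b)}"
        unfolding b(2) Hsub_pos topspace_places using ce_places b(1) by (auto simp: ce restr_def)
      show ?thesis unfolding eqs
      proof (subst openin_subopen, intro ballI)
        fix \<zeta> assume z: "\<zeta> \<in> {\<zeta> \<in> places (ratfun_field R). pos (Pl (\<zeta> var_y) b)}"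
        obtain c where c: "c \<in> ratfun_field R" "pos (Pl (\<zeta> var_y) c)" "\<forall>w. pos (Pl w c) \<longrightarrow> pos (Pl w b)"
          using nbhd[OF R] z by blast
        have T: "openin (places_top (ratfun_field R)) (Hsub (ratfun_field R) c)"
          unfolding places_top_def using c(1) by (intro topology_generated_by_Basis) blast
        have zc: "\<zeta> \<in> Hsub (ratfun_field R) c"
          unfolding Hsub_pos using z c(2) zeta_eq[OF RC] c(1) by (metis (no_types, lifting) mem_Collect_eq restr_in)
        have sub: "Hsub (ratfun_field R) c \<subseteq> {\<zeta> \<in> places (ratfun_field R). pos (Pl (\<zeta> var_y) b)}"
        proof
          fix \<eta> assume "\<eta> \<in> Hsub (ratfun_field R) c"
          then have e: "\<eta> \<in> places (ratfun_field R)" "pos (\<eta> c)" unfolding Hsub_pos by auto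
          have "\<eta> c = Pl (\<eta> var_y) c" using zeta_eq[OF RC e(1)] c(1) by (metis restr_in)
          then show "\<eta> \<in> {\<zeta> \<in> places (ratfun_field R). pos (Pl (\<zeta> var_y) b)}" using e c(3) by auto
        qed
        show "\<exists>T. openin (places_top (ratfun_field R)) T \<and> \<zeta> \<in> T \<and> T \<subseteq> {\<zeta> \<in> places (ratfun_field R). pos (Pl (\<zeta> var_y) b)}"
          using T zc sub by blast
      qed
    qed
  qed
  have P5: "real_closed_subfield F \<longrightarrow>
        homeomorphic_map (places_top (ratfun_field R)) (places_top (ratfun_field F)) (const_ext F)"
  proof
    assume FC: "real_closed_subfield F"
    define g where "g = restr (ratfun_field R)"
    have g_places: "g \<xi> \<in> places (ratfun_field R)" if "\<xi> \<in> places (ratfun_field F)" for \<xi>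
      unfolding g_def places_def
      using restr_place[OF place_places[OF subf_ratfun[OF F] that] subf_ratfun[OF R] RF] by simp
    have gc: "continuous_map (places_top (ratfun_field F)) (places_top (ratfun_field R)) g"
      unfolding places_top_def[of "ratfun_field R"]
    proof (rule continuous_on_generated_topo)
      show "g ` topspace (places_top (ratfun_field F)) \<subseteq> \<Union> (insert (places (ratfun_field R)) {Hsub (ratfun_field R) b |b. b \<in> ratfun_field R})"
        using g_places topspace_places by blast
      fix U assume U: "U \<in> insert (places (ratfun_field R)) {Hsub (ratfun_field R) b |b. b \<in> ratfun_field R}"
      show "openin (places_top (ratfun_field F)) (g -` U \<inter> topspace (places_top (ratfun_field F)))"
      proof (cases "U = places (ratfun_field R)")
        case True
        then have "g -` U \<inter> topspace (places_top (ratfun_field F)) = topspace (places_top (ratfun_field F))"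
          using g_places topspace_places by blast
        then show ?thesis by simp
      next
        case False
        then obtain b where b: "b \<in> ratfun_field R" "U = Hsub (ratfun_field R) b" using U by blast
        have "g -` U \<inter> topspace (places_top (ratfun_field F)) = Hsub (ratfun_field F) b"
          unfolding b(2) Hsub_pos topspace_places using g_places b(1) by (auto simp: g_def restr_def)
        moreover have "openin (places_top (ratfun_field F)) (Hsub (ratfun_field F) b)"
          unfolding places_top_def using b(1) RF by (intro topology_generated_by_Basis) blast
        ultimately show ?thesis by simp
      qed
    qed
    have inv1: "g (const_ext F \<zeta>) = \<zeta>" if z: "\<zeta> \<in> places (ratfun_field R)" for \<zeta>
    proof
      fix a show "g (const_ext F \<zeta>) a = \<zeta> a"
      proof (cases "a \<in> ratfun_field R")
        case True then show ?thesis using P4 z by (simp add: g_def restr_def)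
      next
        case False
        have "\<zeta> a = None" using place.outside[OF place_places[OF subf_ratfun[OF R] z] False] .
        then show ?thesis using False by (simp add: g_def restr_def)
      qed
    qed
    have inv2: "const_ext F (g \<xi>) = \<xi>" if x: "\<xi> \<in> places (ratfun_field F)" for \<xi>
    proof -
      have "is_const_ext F (g \<xi>) \<xi>"
        unfolding is_const_ext_def using x place_id_const[OF FC x] var_in[OF R]
        by (simp add: g_def restr_def)
      then show ?thesis unfolding const_ext_def using is_const_ext_uniq[OF F] by (intro the_equality) blast+
    qed
    show "homeomorphic_map (places_top (ratfun_field R)) (places_top (ratfun_field F)) (const_ext F)"
      unfolding homeomorphic_map_maps homeomorphic_maps_def
      using P2 gc inv1 inv2 topspace_places by blast
  qed
  show ?thesis using P1 P2 P3 P4 P5 by blast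
qed


end
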